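(* Let $(R,\mathfrak{m})$ be a Noetherian local ring and let $\varphi$ be a self-map of finite length of $R$. Then for every $n\geq 1$ the map $\varphi^n$ is of finite length, and the sequence $\{(\log\lambda(\varphi^n))/n\}_{n\geq1}$ converges, and its limit equals $\inf_{n\geq1}(\log\lambda(\varphi^n))/n$.
   Context: All rings are Noetherian, commutative, with identity. A self-map of a ring is a ring endomorphism; $\varphi^n$ denotes the $n$-fold composition. A homomorphism $f:(R,\mathfrak{m})\to(S,\mathfrak{n})$ of Noetherian local rings is of finite length if it is local and $f(\mathfrak{m})S$ is $\mathfrak{n}$-primary; its length is $\lambda(f):=\ell_S(S/f(\mathfrak{m})S)$. A self-map of finite length of $R$ is an endomorphism of $R$ which is a homomorphism of finite length $R\to R$. *)

theory Defs
  imports "HOL-Analysis.Analysis" "HOL-Algebra.Ideal" "HOL-Algebra.RingHom"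
begin

definition noetherian_cring :: "('a, 'b) ring_scheme \<Rightarrow> bool" where
  "noetherian_cring R \<longleftrightarrow> cring R \<and>
     (\<forall>I. ideal I R \<longrightarrow> (\<exists>S. finite S \<and> S \<subseteq> carrier R \<and> I = genideal R S))"

definition noetherian_local :: "('a, 'b) ring_scheme \<Rightarrow> 'a set \<Rightarrow> bool" where
  "noetherian_local R m \<longleftrightarrow> noetherian_cring R \<and> maximalideal m R \<and>
     (\<forall>I. maximalideal I R \<longrightarrow> I = m)"

definition ring_radical :: "('a, 'b) ring_scheme \<Rightarrow> 'a set \<Rightarrow> 'a set" where
  "ring_radical R I = {x \<in> carrier R. \<exists>k::nat. x [^]\<^bsub>R\<^esub> k \<in> I}"

text \<open>Length of the R-module R/I, computed via the correspondence between
  submodules of R/I and ideals of R containing I: the supremum of the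
  lengths of strict chains of ideals from I to R.\<close>
definition quot_length :: "('a, 'b) ring_scheme \<Rightarrow> 'a set \<Rightarrow> nat" where
  "quot_length R I = Sup {k. \<exists>J :: nat \<Rightarrow> 'a set. J 0 = I \<and> J k = carrier R \<and>
       (\<forall>i\<le>k. ideal (J i) R) \<and> (\<forall>i<k. J i \<subset> J (Suc i))}"

definition finite_length_hom ::
  "('a, 'b) ring_scheme \<Rightarrow> 'a set \<Rightarrow> ('c, 'd) ring_scheme \<Rightarrow> 'c set \<Rightarrow> ('a \<Rightarrow> 'c) \<Rightarrow> bool" where
  "finite_length_hom R m S n f \<longleftrightarrow> f \<in> ring_hom R S \<and> f ` m \<subseteq> n \<and>
     ring_radical S (genideal S (f ` m)) = n"

definition hom_length ::
  "('a, 'b) ring_scheme \<Rightarrow> 'a set \<Rightarrow> ('c, 'd) ring_scheme \<Rightarrow> ('a \<Rightarrow> 'c) \<Rightarrow> nat" where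
  "hom_length R m S f = quot_length S (genideal S (f ` m))"

end

theory Submission
  imports Defs "HOL-Algebra.Ring_Divisibility"
begin

no_notation Sum_Type.Plus (infixr \<open><+>\<close> 65)

definition chainI :: "('a, 'b) ring_scheme \<Rightarrow> 'a set \<Rightarrow> 'a set \<Rightarrow> nat \<Rightarrow> bool" where
  "chainI R A B k \<longleftrightarrow> (\<exists>J :: nat \<Rightarrow> 'a set. J 0 = A \<and> J k = B \<and>
       (\<forall>i\<le>k. ideal (J i) R) \<and> (\<forall>i<k. J i \<subset> J (Suc i)))"

definition bnd :: "('a, 'b) ring_scheme \<Rightarrow> 'a set \<Rightarrow> 'a set \<Rightarrow> nat \<Rightarrow> bool" where
  "bnd R A B n \<longleftrightarrow> (\<forall>k. chainI R A B k \<longrightarrow> k \<le> n)"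

lemma weak_chain:
  assumes "\<forall>i\<le>k. ideal (J i) R" "\<forall>i<k. J i \<subseteq> J (Suc i)"
  shows "chainI R (J 0) (J k) (card {i. i<k \<and> J i \<noteq> J (Suc i)})"
  using assms
proof (induction k)
  case 0
  show ?case unfolding chainI_def
    by (rule exI[of _ "\<lambda>_. J 0"]) (use 0 in auto)
next
  case (Suc k)
  have IH: "chainI R (J 0) (J k) (card {i. i<k \<and> J i \<noteq> J (Suc i)})"
    using Suc by auto
  show ?case
  proof (cases "J k = J (Suc k)")
    case True
    have "{i. i<Suc k \<and> J i \<noteq> J (Suc i)} = {i. i<k \<and> J i \<noteq> J (Suc i)}"
      using True less_Suc_eq by auto
    then show ?thesis using IH True by simp
  next
    case False
    have eq: "{i. i<Suc k \<and> J i \<noteq> J (Suc i)} = insert k {i. i<k \<and> J i \<noteq> J (Suc i)}"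
      using False less_Suc_eq by auto
    define c where "c = card {i. i<k \<and> J i \<noteq> J (Suc i)}"
    have cs: "card {i. i<Suc k \<and> J i \<noteq> J (Suc i)} = Suc c"
      unfolding eq c_def by simp
    from IH obtain J' where J': "J' 0 = J 0" "J' c = J k" "\<forall>i\<le>c. ideal (J' i) R"
      "\<forall>i<c. J' i \<subset> J' (Suc i)" unfolding chainI_def c_def by blast
    have sub: "J k \<subset> J (Suc k)" using Suc.prems False by auto
    show ?thesis unfolding cs chainI_def
      apply (rule exI[of _ "J'(Suc c := J (Suc k))"])
      using J' sub Suc.prems
      by (auto simp: le_Suc_eq less_Suc_eq)
  qed
qed

lemma chainI_mono:
  assumes "\<forall>i<k. J i \<subseteq> J (Suc i)" "i \<le> j" "j \<le> k"
  shows "J i \<subseteq> J j"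
  using assms
proof (induction j)
  case 0 then show ?case by simp
next
  case (Suc j)
  show ?case
  proof (cases "i = Suc j")
    case True then show ?thesis by simp
  next
    case False
    then have "i \<le> j" using Suc.prems by simp
    then have "J i \<subseteq> J j" using Suc by simp
    moreover have "J j \<subseteq> J (Suc j)" using Suc.prems by simp
    ultimately show ?thesis by blast
  qed
qed

context cring
begin

lemma ideal_sub_carrier: "ideal I R \<Longrightarrow> I \<subseteq> carrier R"
  using ideal.Icarr[of I R] by (intro subsetI)

lemma ideal_carr: "ideal I R \<Longrightarrow> x \<in> I \<Longrightarrow> x \<in> carrier R"
  by (rule ideal.Icarr)

lemma ideal_add_closed: "ideal I R \<Longrightarrow> a \<in> I \<Longrightarrow> b \<in> I \<Longrightarrow> a \<oplus> b \<in> I"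
  by (rule additive_subgroup.a_closed[OF ideal.axioms(1)])

lemma ideal_zero_closed: "ideal I R \<Longrightarrow> \<zero> \<in> I"
  by (rule additive_subgroup.zero_closed[OF ideal.axioms(1)])

lemma ideal_minus_closed: "ideal I R \<Longrightarrow> a \<in> I \<Longrightarrow> b \<in> I \<Longrightarrow> a \<ominus> b \<in> I"
  unfolding a_minus_def
  by (rule ideal_add_closed, assumption, assumption,
      rule additive_subgroup.a_inv_closed[OF ideal.axioms(1)])

lemma set_addE: "x \<in> A <+> B \<Longrightarrow> (\<And>a b. a \<in> A \<Longrightarrow> b \<in> B \<Longrightarrow> x = a \<oplus> b \<Longrightarrow> P) \<Longrightarrow> P"
  unfolding set_add_def' by blast

lemma set_addI: "a \<in> A \<Longrightarrow> b \<in> B \<Longrightarrow> a \<oplus> b \<in> A <+> B"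
  unfolding set_add_def' by blast

lemma set_add_least:
  assumes "ideal A R" "ideal B R" "ideal C R" "A \<subseteq> C" "B \<subseteq> C"
  shows "A <+> B \<subseteq> C"
proof
  fix x assume "x \<in> A <+> B"
  then obtain a b where "a \<in> A" "b \<in> B" "x = a \<oplus> b" by (rule set_addE)
  then show "x \<in> C" using assms ideal_add_closed[OF assms(3)] by blast
qed

lemma set_add_upper1:
  assumes "ideal A R" "ideal B R"
  shows "A \<subseteq> A <+> B"
proof
  fix a assume a: "a \<in> A"
  have "a \<oplus> \<zero> \<in> A <+> B" by (rule set_addI[OF a ideal_zero_closed[OF assms(2)]])
  moreover have "a \<oplus> \<zero> = a" using ideal_carr[OF assms(1) a] by simp
  ultimately show "a \<in> A <+> B" by simp
qed

lemma set_add_upper2: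
  assumes "ideal A R" "ideal B R"
  shows "B \<subseteq> A <+> B"
proof
  fix b assume b: "b \<in> B"
  have "\<zero> \<oplus> b \<in> A <+> B" by (rule set_addI[OF ideal_zero_closed[OF assms(1)] b])
  moreover have "\<zero> \<oplus> b = b" using ideal_carr[OF assms(2) b] by simp
  ultimately show "b \<in> A <+> B" by simp
qed

lemma set_add_absorb:
  assumes "ideal A R" "ideal B R" "A \<subseteq> B"
  shows "A <+> B = B"
  using set_add_least[OF assms(1,2,2,3)] set_add_upper2[OF assms(1,2)] by blast

lemma set_add_absorb2:
  assumes "ideal A R" "ideal B R" "A \<subseteq> B"
  shows "B <+> A = B"
  using set_add_least[OF assms(2,1,2) _ assms(3)] set_add_upper1[OF assms(2,1)] by blast

lemma set_add_mono:
  assumes "ideal A R" "ideal B R" "ideal A' R" "A \<subseteq> A'"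
  shows "A <+> B \<subseteq> A' <+> B"
proof
  fix x assume "x \<in> A <+> B"
  then obtain a b where "a \<in> A" "b \<in> B" "x = a \<oplus> b" by (rule set_addE)
  then show "x \<in> A' <+> B" using assms(4) set_addI by blast
qed

lemma bnd_subadd:
  assumes iA: "ideal A R" and iB: "ideal B R" and iC: "ideal C R"
    and AB: "A \<subseteq> B" and BC: "B \<subseteq> C"
    and b1: "bnd R A B p" and b2: "bnd R B C q"
  shows "bnd R A C (p + q)"
  unfolding bnd_def
proof (intro allI impI)
  fix k assume "chainI R A C k"
  then obtain J where J: "J 0 = A" "J k = C" "\<forall>i\<le>k. ideal (J i) R" "\<forall>i<k. J i \<subset> J (Suc i)"
    unfolding chainI_def by blast
  define U where "U i = J i \<inter> B" for i
  define V where "V i = J i <+> B" for i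
  have iU: "\<forall>i\<le>k. ideal (U i) R" unfolding U_def using J(3) iB i_intersect by blast
  have iV: "\<forall>i\<le>k. ideal (V i) R" unfolding V_def using J(3) iB add_ideals by blast
  have mU: "\<forall>i<k. U i \<subseteq> U (Suc i)" unfolding U_def using J(4) by blast
  have mV: "\<forall>i<k. V i \<subseteq> V (Suc i)" unfolding V_def using J(3,4) iB
  proof (intro allI impI)
    fix i assume i: "i < k"
    show "J i <+> B \<subseteq> J (Suc i) <+> B"
      by (rule set_add_mono) (use J(3,4) iB i in auto)
  qed
  have U0: "U 0 = A" unfolding U_def using J(1) AB by blast
  have Uk: "U k = B" unfolding U_def using J(2) BC by blast
  have V0: "V 0 = B" unfolding V_def using J(1) set_add_absorb iA iB AB by simp
  have Vk: "V k = C" unfolding V_def using J(2) set_add_absorb2 iB iC BC by simp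
  have c1: "card {i. i<k \<and> U i \<noteq> U (Suc i)} \<le> p"
    using weak_chain[of k U R, OF iU mU] b1 U0 Uk unfolding bnd_def by simp
  have c2: "card {i. i<k \<and> V i \<noteq> V (Suc i)} \<le> q"
    using weak_chain[of k V R, OF iV mV] b2 V0 Vk unfolding bnd_def by simp
  have cover: "{..<k} \<subseteq> {i. i<k \<and> U i \<noteq> U (Suc i)} \<union> {i. i<k \<and> V i \<noteq> V (Suc i)}"
  proof
    fix i assume i: "i \<in> {..<k}"
    show "i \<in> {i. i<k \<and> U i \<noteq> U (Suc i)} \<union> {i. i<k \<and> V i \<noteq> V (Suc i)}"
    proof (rule ccontr)
      assume "\<not> ?thesis"
      then have eU: "U i = U (Suc i)" and eV: "V i = V (Suc i)" using i by auto
      have ii: "ideal (J i) R" "ideal (J (Suc i)) R" using J(3) i by auto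
      have sub: "J i \<subset> J (Suc i)" using J(4) i by auto
      have "J (Suc i) \<subseteq> J i"
      proof
        fix x assume x: "x \<in> J (Suc i)"
        have "x \<in> V (Suc i)" unfolding V_def using set_add_upper1[OF ii(2) iB] x by blast
        then have "x \<in> J i <+> B" using eV V_def by simp
        then obtain j b where jb: "j \<in> J i" "b \<in> B" "x = j \<oplus> b" by (rule set_addE)
        have jc: "j \<in> carrier R" using jb ii ideal_carr by blast
        have bc: "b \<in> carrier R" using jb iB ideal_carr by blast
        have bx: "b = x \<ominus> j" using jb jc bc by (simp add: a_minus_def add.m_ac r_neg)
        have "j \<in> J (Suc i)" using jb sub by blast
        then have "x \<ominus> j \<in> J (Suc i)" using x ii(2) ideal_minus_closed by blast
        then have "b \<in> U (Suc i)" unfolding U_def using bx jb by blast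
        then have "b \<in> J i" using eU U_def by blast
        then show "x \<in> J i" using jb ii(1) ideal_add_closed by blast
      qed
      then show False using sub by blast
    qed
  qed
  have "k = card {..<k}" by simp
  also have "\<dots> \<le> card ({i. i<k \<and> U i \<noteq> U (Suc i)} \<union> {i. i<k \<and> V i \<noteq> V (Suc i)})"
    by (rule card_mono[OF _ cover]) auto
  also have "\<dots> \<le> card {i. i<k \<and> U i \<noteq> U (Suc i)} + card {i. i<k \<and> V i \<noteq> V (Suc i)}"
    by (rule card_Un_le)
  finally show "k \<le> p + q" using c1 c2 by linarith
qed


lemma chainI_sub:
  assumes "chainI R A B k"
  shows "A \<subseteq> B" "ideal A R" "ideal B R" "k > 0 \<Longrightarrow> A \<subset> B"
proof -
  obtain J where J: "J 0 = A" "J k = B" "\<forall>i\<le>k. ideal (J i) R" "\<forall>i<k. J i \<subset> J (Suc i)"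
    using assms unfolding chainI_def by blast
  have m: "\<forall>i<k. J i \<subseteq> J (Suc i)" using J(4) by blast
  show "A \<subseteq> B" using chainI_mono[OF m, of 0 k] J by simp
  show "ideal A R" using J by auto
  show "ideal B R" using J by auto
  assume "k > 0"
  then have "J 0 \<subset> J 1" using J(4) by auto
  moreover have "J 1 \<subseteq> J k" using chainI_mono[OF m, of 1 k] \<open>k > 0\<close> by simp
  ultimately show "A \<subset> B" using J by auto
qed

lemma colon_ideal:
  assumes "ideal M R" "y \<in> carrier R"
  shows "ideal {r \<in> carrier R. r \<otimes> y \<in> M} R"
proof (rule idealI[OF ring_axioms])
  show "subgroup {r \<in> carrier R. r \<otimes> y \<in> M} (add_monoid R)"
  proof (rule subgroup.intro)
    show "{r \<in> carrier R. r \<otimes> y \<in> M} \<subseteq> carrier (add_monoid R)" by auto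
    fix a b assume a: "a \<in> {r \<in> carrier R. r \<otimes> y \<in> M}" and b: "b \<in> {r \<in> carrier R. r \<otimes> y \<in> M}"
    then have "(a \<oplus> b) \<otimes> y = a \<otimes> y \<oplus> b \<otimes> y" using assms(2) l_distr by auto
    then show "a \<otimes>\<^bsub>add_monoid R\<^esub> b \<in> {r \<in> carrier R. r \<otimes> y \<in> M}"
      using a b ideal_add_closed[OF assms(1)] by auto
  next
    have "\<zero> \<otimes> y = \<zero>" using assms(2) by simp
    then show "\<one>\<^bsub>add_monoid R\<^esub> \<in> {r \<in> carrier R. r \<otimes> y \<in> M}"
      using ideal_zero_closed[OF assms(1)] by auto
  next
    fix a assume a: "a \<in> {r \<in> carrier R. r \<otimes> y \<in> M}"
    have "(\<ominus> a) \<otimes> y = \<ominus> (a \<otimes> y)" using a assms(2) l_minus by auto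
    moreover have "\<ominus> (a \<otimes> y) \<in> M" using a additive_subgroup.a_inv_closed[OF ideal.axioms(1)[OF assms(1)]] by auto
    ultimately show "inv\<^bsub>add_monoid R\<^esub> a \<in> {r \<in> carrier R. r \<otimes> y \<in> M}"
      using a by (simp add: a_inv_def[symmetric])
  qed
next
  fix a x assume a: "a \<in> {r \<in> carrier R. r \<otimes> y \<in> M}" and x: "x \<in> carrier R"
  have "(x \<otimes> a) \<otimes> y = x \<otimes> (a \<otimes> y)" using a x assms(2) m_assoc by auto
  then show "x \<otimes> a \<in> {r \<in> carrier R. r \<otimes> y \<in> M}"
    using a x ideal.I_l_closed[OF assms(1)] by auto
  have "(a \<otimes> x) \<otimes> y = x \<otimes> (a \<otimes> y)" using a x assms(2) m_assoc m_comm by auto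
  then show "a \<otimes> x \<in> {r \<in> carrier R. r \<otimes> y \<in> M}"
    using a x ideal.I_l_closed[OF assms(1)] by auto
qed

lemma bnd_cyclic:
  assumes iA: "ideal A R" and iK: "ideal K R" and y: "y \<in> carrier R"
    and Ky: "\<forall>r\<in>K. r \<otimes> y \<in> A" and b: "bnd R K (carrier R) q"
  shows "bnd R A (A <+> PIdl y) q"
  unfolding bnd_def
proof (intro allI impI)
  fix t assume "chainI R A (A <+> PIdl y) t"
  then obtain M where M: "M 0 = A" "M t = A <+> PIdl y" "\<forall>i\<le>t. ideal (M i) R"
    "\<forall>i<t. M i \<subset> M (Suc i)" unfolding chainI_def by blast
  have mM: "\<forall>i<t. M i \<subseteq> M (Suc i)" using M(4) by blast
  define P where "P j = {r \<in> carrier R. r \<otimes> y \<in> M j}" for j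
  have iP: "\<forall>i\<le>t. ideal (P i) R" unfolding P_def using M(3) colon_ideal y by blast
  have iPI: "ideal (PIdl y) R" using cgenideal_ideal[OF y] .
  have Pt: "P t = carrier R"
  proof -
    have "r \<otimes> y \<in> M t" if "r \<in> carrier R" for r
    proof -
      have "r \<otimes> y \<in> PIdl y" using that unfolding cgenideal_def by blast
      then show ?thesis using M(2) set_add_upper2[OF iA iPI] by blast
    qed
    then show ?thesis unfolding P_def by blast
  qed
  have KP0: "K \<subseteq> P 0" unfolding P_def using Ky M(1) ideal_sub_carrier[OF iK] by blast
  have strict: "P i \<subset> P (Suc i)" if i: "i < t" for i
  proof
    show sub: "P i \<subseteq> P (Suc i)" unfolding P_def using M(4) i by blast
    show "P i \<noteq> P (Suc i)"
    proof
      assume eq: "P i = P (Suc i)"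
      have "M (Suc i) \<subseteq> M i"
      proof
        fix x assume x: "x \<in> M (Suc i)"
        have "M (Suc i) \<subseteq> M t" using chainI_mono[OF mM, of "Suc i" t] i by simp
        then have "x \<in> A <+> PIdl y" using x M(2) by blast
        then obtain a z where az: "a \<in> A" "z \<in> PIdl y" "x = a \<oplus> z" by (rule set_addE)
        then obtain r where r: "r \<in> carrier R" "z = r \<otimes> y" unfolding cgenideal_def by blast
        have ac: "a \<in> carrier R" using ideal_carr[OF iA az(1)] .
        have AM: "A \<subseteq> M j" if "j \<le> t" for j using chainI_mono[OF mM, of 0 j] that M(1) by simp
        have aS: "a \<in> M (Suc i)" using AM[of "Suc i"] i az by auto
        have "z = x \<ominus> a" using az ac r y by (simp add: a_minus_def add.m_ac r_neg r_neg2)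
        then have "z \<in> M (Suc i)" using ideal_minus_closed[of "M (Suc i)" x a] M(3) i x aS by simp
        then have "r \<in> P (Suc i)" unfolding P_def using r by simp
        then have "r \<in> P i" using eq by simp
        then have "z \<in> M i" unfolding P_def using r by simp
        moreover have "a \<in> M i" using AM[of i] i az by auto
        ultimately show "x \<in> M i" using az ideal_add_closed[of "M i"] M(3) i by simp
      qed
      then show False using M(4) i by blast
    qed
  qed
  show "t \<le> q"
  proof (cases "t = 0")
    case True then show ?thesis by simp
  next
    case False
    define Q where "Q = P(0 := K)"
    have "chainI R K (carrier R) t" unfolding chainI_def
    proof (rule exI[of _ Q], intro conjI allI impI)
      show "Q 0 = K" unfolding Q_def by simp
      show "Q t = carrier R" unfolding Q_def using False Pt by simp
      fix i
      show "i \<le> t \<Longrightarrow> ideal (Q i) R" unfolding Q_def using iP iK by auto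
      assume i: "i < t"
      show "Q i \<subset> Q (Suc i)"
      proof (cases "i = 0")
        case True then show ?thesis unfolding Q_def using KP0 strict[OF i] by auto
      next
        case False then show ?thesis unfolding Q_def using strict[OF i] by auto
      qed
    qed
    then show ?thesis using b unfolding bnd_def by blast
  qed
qed

lemma bnd_mono_left:
  assumes iA': "ideal A' R" and iA: "ideal A R" and sub: "A' \<subseteq> A" and b: "bnd R A' B n"
  shows "bnd R A B n"
  unfolding bnd_def
proof (intro allI impI)
  fix k assume c: "chainI R A B k"
  show "k \<le> n"
  proof (cases "A' = A")
    case True then show ?thesis using b c unfolding bnd_def by blast
  next
    case False
    obtain J where J: "J 0 = A" "J k = B" "\<forall>i\<le>k. ideal (J i) R" "\<forall>i<k. J i \<subset> J (Suc i)"
      using c unfolding chainI_def by blast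
    define J' where "J' i = (if i = 0 then A' else J (i - 1))" for i
    have "chainI R A' B (Suc k)" unfolding chainI_def
    proof (rule exI[of _ J'], intro conjI allI impI)
      show "J' 0 = A'" unfolding J'_def by simp
      show "J' (Suc k) = B" unfolding J'_def using J by simp
      fix i
      show "i \<le> Suc k \<Longrightarrow> ideal (J' i) R" unfolding J'_def using J(3) iA' by auto
      assume i: "i < Suc k"
      show "J' i \<subset> J' (Suc i)"
      proof (cases "i = 0")
        case True then show ?thesis unfolding J'_def using J(1) sub False by auto
      next
        case False
        then obtain i' where "i = Suc i'" by (cases i) auto
        then show ?thesis unfolding J'_def using J(4) i by auto
      qed
    qed
    then show ?thesis using b unfolding bnd_def by fastforce
  qed
qed

lemma bnd_carrier: "bnd R (carrier R) (carrier R) 0"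
  unfolding bnd_def
proof (intro allI impI)
  fix k assume c: "chainI R (carrier R) (carrier R) k"
  show "k \<le> 0"
  proof (rule ccontr)
    assume "\<not> k \<le> 0"
    then show False using chainI_sub(4)[OF c] by simp
  qed
qed

lemma bnd_maximal:
  assumes "maximalideal m R"
  shows "bnd R m (carrier R) 1"
  unfolding bnd_def
proof (intro allI impI)
  fix k assume c: "chainI R m (carrier R) k"
  obtain J where J: "J 0 = m" "J k = carrier R" "\<forall>i\<le>k. ideal (J i) R" "\<forall>i<k. J i \<subset> J (Suc i)"
    using c unfolding chainI_def by blast
  show "k \<le> 1"
  proof (rule ccontr)
    assume "\<not> k \<le> 1"
    then have k: "2 \<le> k" by simp
    have i1: "ideal (J 1) R" using J(3) k by auto
    have "J 0 \<subset> J (Suc 0)" using J(4) k by simp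
    then have "m \<subset> J 1" using J(1) by simp
    then have "J 1 = carrier R"
      using maximalideal.I_maximal[OF assms i1] ideal_sub_carrier[OF i1] by blast
    moreover have "J 1 \<subset> J 2" using J(4) k by (auto simp: numeral_2_eq_2)
    moreover have "J 2 \<subseteq> carrier R" using ideal_sub_carrier J(3) k by auto
    ultimately show False by blast
  qed
qed

lemma exists_maximal:
  assumes iI: "ideal I R" and np: "I \<noteq> carrier R"
  shows "\<exists>M. maximalideal M R \<and> I \<subseteq> M"
proof -
  define \<A> where "\<A> = {J. ideal J R \<and> I \<subseteq> J \<and> \<one> \<notin> J}"
  have oneI: "\<one> \<notin> I" using ideal.one_imp_carrier[OF iI] np by blast
  have "\<exists>M\<in>\<A>. \<forall>X\<in>\<A>. M \<subseteq> X \<longrightarrow> X = M"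
  proof (rule subset_Zorn_nonempty)
    show "\<A> \<noteq> {}" unfolding \<A>_def using iI oneI by blast
    fix C assume C: "C \<noteq> {}" "subset.chain \<A> C"
    have CA: "C \<subseteq> \<A>" using C(2) by (simp add: pred_on.chain_def)
    have "subset.chain {I. ideal I R} C"
      using C(2) CA unfolding pred_on.chain_def \<A>_def by auto
    then have "ideal (\<Union>C) R" using chain_Union_is_ideal[of C] C(1) by simp
    moreover obtain c where c: "c \<in> C" using C(1) by blast
    then have "I \<subseteq> \<Union>C" using CA unfolding \<A>_def by auto
    moreover have "\<one> \<notin> \<Union>C" using CA unfolding \<A>_def by auto
    ultimately show "\<Union>C \<in> \<A>" unfolding \<A>_def by simp
  qed
  then obtain M where M: "M \<in> \<A>" "\<And>X. X \<in> \<A> \<Longrightarrow> M \<subseteq> X \<Longrightarrow> X = M" by blast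
  have iM: "ideal M R" and IM: "I \<subseteq> M" and oM: "\<one> \<notin> M" using M(1) unfolding \<A>_def by auto
  have "maximalideal M R"
  proof (rule maximalidealI[OF iM])
    show "carrier R \<noteq> M" using oM by auto
    fix J assume J: "ideal J R" "M \<subseteq> J" "J \<subseteq> carrier R"
    show "J = M \<or> J = carrier R"
    proof (cases "\<one> \<in> J")
      case True then show ?thesis using ideal.one_imp_carrier[OF J(1)] by blast
    next
      case False
      then have "J \<in> \<A>" unfolding \<A>_def using J IM by blast
      then show ?thesis using M(2) J(2) by blast
    qed
  qed
  then show ?thesis using IM by blast
qed


lemma bnd_refl: "bnd R A A 0"
  unfolding bnd_def
proof (intro allI impI)
  fix k assume c: "chainI R A A k"
  show "k \<le> 0"
  proof (rule ccontr)
    assume "\<not> k \<le> 0"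
    then show False using chainI_sub(4)[OF c] by simp
  qed
qed

lemma bnd_iter:
  assumes iL: "\<forall>i\<le>k. ideal (L i) R" and mL: "\<forall>i<k. L i \<subseteq> L (Suc i)"
    and b: "\<forall>i<k. bnd R (L i) (L (Suc i)) q"
  shows "bnd R (L 0) (L k) (k * q)"
  using assms
proof (induction k)
  case 0 then show ?case using bnd_refl by simp
next
  case (Suc k)
  have IH: "bnd R (L 0) (L k) (k * q)" using Suc by simp
  have "L 0 \<subseteq> L k" using chainI_mono[of k L 0 k] Suc.prems(2) by simp
  have "bnd R (L 0) (L (Suc k)) (k * q + q)"
    by (rule bnd_subadd[OF _ _ _ \<open>L 0 \<subseteq> L k\<close> _ IH]) (use Suc.prems in auto)
  then show ?case by (simp add: add.commute)
qed

lemma quot_length_chainI: "quot_length R I = Sup {k. chainI R I (carrier R) k}"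
  unfolding quot_length_def chainI_def by simp

lemma chainI_exists:
  assumes "ideal I R"
  shows "\<exists>k. chainI R I (carrier R) k"
proof (cases "I = carrier R")
  case True
  then show ?thesis unfolding chainI_def
    by (intro exI[of _ 0] exI[of _ "\<lambda>_. I"]) (use assms in simp)
next
  case False
  then have "I \<subset> carrier R" using ideal_sub_carrier[OF assms] by blast
  then show ?thesis unfolding chainI_def
    by (intro exI[of _ 1] exI[of _ "\<lambda>i. if i = 0 then I else carrier R"]) (use assms oneideal in auto)
qed

lemma quot_length_props:
  assumes iI: "ideal I R" and b: "bnd R I (carrier R) n"
  shows "quot_length R I \<le> n" "chainI R I (carrier R) (quot_length R I)"
    "\<And>k. chainI R I (carrier R) k \<Longrightarrow> k \<le> quot_length R I"
proof -
  define S where "S = {k. chainI R I (carrier R) k}"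
  have fin: "finite S" unfolding S_def using b unfolding bnd_def
    by (metis (mono_tags, lifting) finite_nat_set_iff_bounded_le mem_Collect_eq)
  have ne: "S \<noteq> {}" unfolding S_def using chainI_exists[OF iI] by blast
  have ql: "quot_length R I = Max S" unfolding quot_length_chainI S_def[symmetric]
    using fin ne by (simp add: Sup_nat_def)
  show "quot_length R I \<le> n" unfolding ql using fin ne b unfolding S_def bnd_def by simp
  show "chainI R I (carrier R) (quot_length R I)" unfolding ql using Max_in[OF fin ne] S_def by simp
  fix k assume "chainI R I (carrier R) k"
  then show "k \<le> quot_length R I" unfolding ql using fin S_def by simp
qed

lemma quot_length_pos:
  assumes iI: "ideal I R" and b: "bnd R I (carrier R) n" and np: "I \<noteq> carrier R"
  shows "1 \<le> quot_length R I"
proof -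
  have "I \<subset> carrier R" using ideal_sub_carrier[OF iI] np by blast
  then have "chainI R I (carrier R) 1" unfolding chainI_def
    by (intro exI[of _ "\<lambda>i. if i = 0 then I else carrier R"]) (use iI oneideal in auto)
  then show ?thesis using quot_length_props(3)[OF iI b] by blast
qed

lemma mult_image_ideal:
  assumes "ideal I R" "x \<in> carrier R"
  shows "ideal ((\<lambda>a. a \<otimes> x) ` I) R"
proof (rule idealI[OF ring_axioms])
  have Ic: "I \<subseteq> carrier R" using ideal_sub_carrier[OF assms(1)] .
  show "subgroup ((\<lambda>a. a \<otimes> x) ` I) (add_monoid R)"
  proof (rule subgroup.intro)
    show "(\<lambda>a. a \<otimes> x) ` I \<subseteq> carrier (add_monoid R)" using Ic assms(2) by auto
    fix u v assume u: "u \<in> (\<lambda>a. a \<otimes> x) ` I" and v: "v \<in> (\<lambda>a. a \<otimes> x) ` I"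
    then obtain a b where ab: "a \<in> I" "b \<in> I" "u = a \<otimes> x" "v = b \<otimes> x" by blast
    have "a \<in> carrier R" "b \<in> carrier R" using ab Ic by auto
    then have "u \<oplus> v = (a \<oplus> b) \<otimes> x" using ab assms(2) l_distr by simp
    moreover have "a \<oplus> b \<in> I" using ideal_add_closed[OF assms(1) ab(1,2)] .
    ultimately show "u \<otimes>\<^bsub>add_monoid R\<^esub> v \<in> (\<lambda>a. a \<otimes> x) ` I" by auto
  next
    have "\<zero> = \<zero> \<otimes> x" using assms(2) by simp
    then show "\<one>\<^bsub>add_monoid R\<^esub> \<in> (\<lambda>a. a \<otimes> x) ` I" using ideal_zero_closed[OF assms(1)] by auto
  next
    fix u assume u: "u \<in> (\<lambda>a. a \<otimes> x) ` I"
    then obtain a where a: "a \<in> I" "u = a \<otimes> x" by blast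
    have ac: "a \<in> carrier R" using Ic a by blast
    have "\<ominus> u = (\<ominus> a) \<otimes> x" using a ac assms(2) l_minus by simp
    moreover have "\<ominus> a \<in> I" using additive_subgroup.a_inv_closed[OF ideal.axioms(1)[OF assms(1)] a(1)] .
    ultimately show "inv\<^bsub>add_monoid R\<^esub> u \<in> (\<lambda>a. a \<otimes> x) ` I" by (simp add: a_inv_def[symmetric])
  qed
next
  have Ic: "I \<subseteq> carrier R" using ideal_sub_carrier[OF assms(1)] .
  fix u y assume u: "u \<in> (\<lambda>a. a \<otimes> x) ` I" and y: "y \<in> carrier R"
  then obtain a where a: "a \<in> I" "u = a \<otimes> x" by blast
  have ac: "a \<in> carrier R" using Ic a by blast
  have "y \<otimes> u = (y \<otimes> a) \<otimes> x" using a ac y assms(2) m_assoc by simp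
  moreover have "y \<otimes> a \<in> I" using ideal.I_l_closed[OF assms(1) a(1) y] .
  ultimately show "y \<otimes> u \<in> (\<lambda>a. a \<otimes> x) ` I" by auto
  have "u \<otimes> y = (y \<otimes> a) \<otimes> x" using a ac y assms(2) m_assoc m_comm m_lcomm by simp
  then show "u \<otimes> y \<in> (\<lambda>a. a \<otimes> x) ` I" using \<open>y \<otimes> a \<in> I\<close> by auto
qed

lemma genideal_image:
  assumes g: "g \<in> ring_hom R R" and S: "S \<subseteq> carrier R"
  shows "Idl (g ` (Idl S)) = Idl (g ` S)"
proof
  have gS: "g ` S \<subseteq> carrier R" using S ring_hom_closed[OF g] by blast
  have iT: "ideal (Idl (g ` S)) R" using genideal_ideal[OF gS] .
  define P where "P = {r \<in> carrier R. g r \<in> Idl (g ` S)}"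
  have iP: "ideal P R"
  proof (rule idealI[OF ring_axioms])
    show "subgroup P (add_monoid R)"
    proof (rule subgroup.intro)
      show "P \<subseteq> carrier (add_monoid R)" unfolding P_def by auto
      fix a b assume "a \<in> P" "b \<in> P"
      then show "a \<otimes>\<^bsub>add_monoid R\<^esub> b \<in> P" unfolding P_def
        using ring_hom_add[OF g] ideal_add_closed[OF iT] by auto
    next
      have "g \<zero> = \<zero>" using ring_hom_zero[OF g ring_axioms ring_axioms] .
      then show "\<one>\<^bsub>add_monoid R\<^esub> \<in> P" unfolding P_def using ideal_zero_closed[OF iT] by auto
    next
      fix a assume a: "a \<in> P"
      have "g (\<ominus> a) = \<ominus> g a"
        using a ring_hom_closed[OF g] ring_hom_add[OF g] unfolding P_def
        by (metis (no_types, lifting) abelian_group.a_inv_closed abelian_group.minus_equality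
            is_abelian_group mem_Collect_eq r_neg ring_hom_zero[OF g ring_axioms ring_axioms])
      then show "inv\<^bsub>add_monoid R\<^esub> a \<in> P" using a unfolding P_def
        using additive_subgroup.a_inv_closed[OF ideal.axioms(1)[OF iT]]
        by (simp add: a_inv_def[symmetric])
    qed
  next
    fix a x assume a: "a \<in> P" and x: "x \<in> carrier R"
    then show "x \<otimes> a \<in> P" "a \<otimes> x \<in> P" unfolding P_def
      using ring_hom_mult[OF g] ideal.I_l_closed[OF iT] ideal.I_r_closed[OF iT] ring_hom_closed[OF g]
      by auto
  qed
  have "S \<subseteq> P" unfolding P_def using S genideal_self[OF gS] by blast
  then have "Idl S \<subseteq> P" using genideal_minimal[OF iP] by blast
  then have "g ` (Idl S) \<subseteq> Idl (g ` S)" unfolding P_def by blast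
  then show "Idl (g ` (Idl S)) \<subseteq> Idl (g ` S)" using genideal_minimal[OF iT] by blast
next
  have "S \<subseteq> Idl S" using genideal_self[OF S] .
  moreover have "Idl S \<subseteq> carrier R" using ideal_sub_carrier[OF genideal_ideal[OF S]] .
  ultimately show "Idl (g ` S) \<subseteq> Idl (g ` (Idl S))"
    using subset_Idl_subset[of "g ` (Idl S)" "g ` S"] ring_hom_closed[OF g] by blast
qed

end

locale lring = cring +
  fixes m
  assumes max: "maximalideal m R"
    and uniq: "\<And>I. maximalideal I R \<Longrightarrow> I = m"
begin

lemma im: "ideal m R" using maximalideal.axioms(1)[OF max] .

lemma m_ne: "m \<noteq> carrier R" using maximalideal.I_notcarr[OF max] by blast

lemma one_notin_m: "\<one> \<notin> m" using ideal.one_imp_carrier[OF im] m_ne by blast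

lemma m_carr: "m \<subseteq> carrier R" using ideal_sub_carrier[OF im] .

lemma proper_in_m:
  assumes "ideal I R" "I \<noteq> carrier R"
  shows "I \<subseteq> m"
  using exists_maximal[OF assms] uniq by blast

lemma unit_lemma:
  assumes a: "a \<in> m"
  shows "\<exists>u\<in>carrier R. u \<otimes> (\<one> \<ominus> a) = \<one>"
proof -
  have ac: "a \<in> carrier R" using a m_carr by blast
  have c: "\<one> \<ominus> a \<in> carrier R" using ac by simp
  have iP: "ideal (PIdl (\<one> \<ominus> a)) R" using cgenideal_ideal[OF c] .
  have "PIdl (\<one> \<ominus> a) = carrier R"
  proof (rule ccontr)
    assume "PIdl (\<one> \<ominus> a) \<noteq> carrier R"
    then have "PIdl (\<one> \<ominus> a) \<subseteq> m" using proper_in_m iP by blast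
    then have "\<one> \<ominus> a \<in> m" using cgenideal_self[OF c] by blast
    then have "(\<one> \<ominus> a) \<oplus> a \<in> m" using ideal_add_closed[OF im _ a] by blast
    moreover have "(\<one> \<ominus> a) \<oplus> a = \<one>" using ac by algebra
    ultimately show False using one_notin_m by simp
  qed
  then have "\<one> \<in> PIdl (\<one> \<ominus> a)" by simp
  then obtain u where "u \<in> carrier R" "\<one> = u \<otimes> (\<one> \<ominus> a)" unfolding cgenideal_def by blast
  then show ?thesis by metis
qed

lemma step_simple:
  assumes i0: "ideal J0 R" and i1: "ideal J1 R" and s: "J0 \<subset> J1"
    and nb: "\<And>L. ideal L R \<Longrightarrow> J0 \<subseteq> L \<Longrightarrow> L \<subseteq> J1 \<Longrightarrow> L = J0 \<or> L = J1"
  shows "\<exists>x\<in>carrier R. J1 = J0 <+> PIdl x \<and> (\<forall>a\<in>m. a \<otimes> x \<in> J0)"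
proof -
  obtain x where x: "x \<in> J1" "x \<notin> J0" using s by blast
  have xc: "x \<in> carrier R" using ideal_carr[OF i1 x(1)] .
  have iP: "ideal (PIdl x) R" using cgenideal_ideal[OF xc] .
  have iL: "ideal (J0 <+> PIdl x) R" using add_ideals[OF i0 iP] .
  have "J0 <+> PIdl x \<subseteq> J1"
    using set_add_least[OF i0 iP i1] s cgenideal_minimal[OF i1 x(1)] by blast
  moreover have "J0 \<subseteq> J0 <+> PIdl x" using set_add_upper1[OF i0 iP] .
  moreover have "x \<in> J0 <+> PIdl x" using set_add_upper2[OF i0 iP] cgenideal_self[OF xc] by blast
  ultimately have eq1: "J1 = J0 <+> PIdl x" using nb[OF iL] x(2) by blast
  define Mx where "Mx = (\<lambda>a. a \<otimes> x) ` m"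
  have iMx: "ideal Mx R" unfolding Mx_def using mult_image_ideal[OF im xc] .
  have iN: "ideal (J0 <+> Mx) R" using add_ideals[OF i0 iMx] .
  have Mx1: "Mx \<subseteq> J1" unfolding Mx_def using ideal.I_l_closed[OF i1 x(1)] m_carr by blast
  have "J0 <+> Mx \<subseteq> J1" using set_add_least[OF i0 iMx i1] s Mx1 by blast
  moreover have "J0 \<subseteq> J0 <+> Mx" using set_add_upper1[OF i0 iMx] .
  moreover have "J0 <+> Mx \<noteq> J1"
  proof
    assume "J0 <+> Mx = J1"
    then have "x \<in> J0 <+> Mx" using x by simp
    then obtain j z where jz: "j \<in> J0" "z \<in> Mx" "x = j \<oplus> z" by (rule set_addE)
    then obtain a where a: "a \<in> m" "z = a \<otimes> x" unfolding Mx_def by blast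
    have ac: "a \<in> carrier R" using a m_carr by blast
    have jc: "j \<in> carrier R" using ideal_carr[OF i0 jz(1)] .
    have "(\<one> \<ominus> a) \<otimes> x = j"
    proof -
      have "(\<one> \<ominus> a) \<otimes> x = x \<ominus> a \<otimes> x" using ac xc by algebra
      also have "\<dots> = x \<ominus> z" using a by simp
      also have "\<dots> = j"
      proof -
        have zc: "z \<in> carrier R" using a ac xc by simp
        have "(j \<oplus> z) \<ominus> z = j" using jc zc by algebra
        then show ?thesis using jz(3) by simp
      qed
      finally show ?thesis .
    qed
    obtain u where u: "u \<in> carrier R" "u \<otimes> (\<one> \<ominus> a) = \<one>" using unit_lemma[OF a(1)] by blast
    have "x = u \<otimes> ((\<one> \<ominus> a) \<otimes> x)"
    proof -
      have "u \<otimes> ((\<one> \<ominus> a) \<otimes> x) = (u \<otimes> (\<one> \<ominus> a)) \<otimes> x"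
        using u(1) ac xc by (intro m_assoc[symmetric]) auto
      also have "\<dots> = \<one> \<otimes> x" by (simp only: u(2))
      also have "\<dots> = x" using xc by simp
      finally show ?thesis by simp
    qed
    also have "\<dots> = u \<otimes> j" using \<open>(\<one> \<ominus> a) \<otimes> x = j\<close> by simp
    finally have "x \<in> J0" using ideal.I_l_closed[OF i0 jz(1) u(1)] by simp
    then show False using x by simp
  qed
  ultimately have "J0 <+> Mx = J0" using nb[OF iN] by blast
  then have "Mx \<subseteq> J0" using set_add_upper2[OF i0 iMx] by blast
  then show ?thesis using eq1 xc unfolding Mx_def by blast
qed


lemma maxchain_step:
  assumes iI: "ideal I R" and b: "bnd R I (carrier R) n"
    and J: "J 0 = I" "J k = carrier R" "\<forall>i\<le>k. ideal (J i) R" "\<forall>i<k. J i \<subset> J (Suc i)"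
    and k: "k = quot_length R I"
    and i: "i < k" and iL: "ideal L R" and L1: "J i \<subseteq> L" and L2: "L \<subseteq> J (Suc i)"
  shows "L = J i \<or> L = J (Suc i)"
proof (rule ccontr)
  assume "\<not> ?thesis"
  then have s1: "J i \<subset> L" and s2: "L \<subset> J (Suc i)" using L1 L2 by auto
  define J' where "J' j = (if j \<le> i then J j else if j = Suc i then L else J (j - 1))" for j
  have "chainI R I (carrier R) (Suc k)" unfolding chainI_def
  proof (rule exI[of _ J'], intro conjI allI impI)
    show "J' 0 = I" unfolding J'_def using J by simp
    show "J' (Suc k) = carrier R" unfolding J'_def using J i by simp
    fix j
    show "j \<le> Suc k \<Longrightarrow> ideal (J' j) R" unfolding J'_def using J(3) iL i by auto
    assume j: "j < Suc k"
    consider "j < i" | "j = i" | "j = Suc i" | "j > Suc i" by linarith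
    then show "J' j \<subset> J' (Suc j)"
    proof cases
      case 1 then show ?thesis unfolding J'_def using J(4) i by auto
    next
      case 2 then show ?thesis unfolding J'_def using s1 by auto
    next
      case 3 then show ?thesis unfolding J'_def using s2 by auto
    next
      case 4
      then obtain j' where j': "j = Suc j'" "j' > i" by (cases j) auto
      then show ?thesis unfolding J'_def using J(4) j by auto
    qed
  qed
  then have "Suc k \<le> quot_length R I" using quot_length_props(3)[OF iI b] by blast
  then show False using k by simp
qed

lemma mult_bound:
  assumes f: "f \<in> ring_hom R R" and g: "g \<in> ring_hom R R"
    and bf: "bnd R (Idl (f ` m)) (carrier R) nf"
    and bg: "bnd R (Idl (g ` m)) (carrier R) q"
  shows "bnd R (Idl ((g \<circ> f) ` m)) (carrier R) (quot_length R (Idl (f ` m)) * q)"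
proof -
  define I where "I = Idl (f ` m)"
  define K where "K = Idl (g ` m)"
  define k where "k = quot_length R I"
  have fm: "f ` m \<subseteq> carrier R" using m_carr ring_hom_closed[OF f] by blast
  have gm: "g ` m \<subseteq> carrier R" using m_carr ring_hom_closed[OF g] by blast
  have iI: "ideal I R" unfolding I_def using genideal_ideal[OF fm] .
  have iK: "ideal K R" unfolding K_def using genideal_ideal[OF gm] .
  have bf': "bnd R I (carrier R) nf" using bf I_def by simp
  obtain J where J: "J 0 = I" "J k = carrier R" "\<forall>i\<le>k. ideal (J i) R" "\<forall>i<k. J i \<subset> J (Suc i)"
    using quot_length_props(2)[OF iI bf'] unfolding k_def chainI_def by blast
  have mJ: "\<forall>i<k. J i \<subseteq> J (Suc i)" using J(4) by blast
  have Jc: "J i \<subseteq> carrier R" if "i \<le> k" for i using J(3) that ideal_sub_carrier by blast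
  have gJ: "g ` J i \<subseteq> carrier R" if "i \<le> k" for i using Jc[OF that] ring_hom_closed[OF g] by blast
  define L where "L i = Idl (g ` J i)" for i
  have iL: "\<forall>i\<le>k. ideal (L i) R" unfolding L_def using gJ genideal_ideal by blast
  have mL: "\<forall>i<k. L i \<subseteq> L (Suc i)"
  proof (intro allI impI)
    fix i assume i: "i < k"
    have "g ` J i \<subseteq> g ` J (Suc i)" using mJ i by blast
    then show "L i \<subseteq> L (Suc i)" unfolding L_def
      by (rule subset_Idl_subset[rotated]) (use gJ[of "Suc i"] i in auto)
  qed
  have L0: "L 0 = Idl ((g \<circ> f) ` m)"
    unfolding L_def J(1) I_def using genideal_image[OF g fm] by (simp add: image_comp)
  have Lk: "L k = carrier R"
  proof -
    have "\<one> \<in> g ` J k" using J(2) ring_hom_one[OF g] by force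
    then have "\<one> \<in> L k" unfolding L_def using genideal_self[OF gJ[of k]] by blast
    then show ?thesis using ideal.one_imp_carrier iL by blast
  qed
  have bL: "\<forall>i<k. bnd R (L i) (L (Suc i)) q"
  proof (intro allI impI)
    fix i assume i: "i < k"
    have ii: "ideal (J i) R" "ideal (J (Suc i)) R" using J(3) i by auto
    have nb: "\<And>M. ideal M R \<Longrightarrow> J i \<subseteq> M \<Longrightarrow> M \<subseteq> J (Suc i) \<Longrightarrow> M = J i \<or> M = J (Suc i)"
      using maxchain_step[OF iI bf' J _ i] k_def by blast
    obtain x where x: "x \<in> carrier R" "J (Suc i) = J i <+> PIdl x" "\<forall>a\<in>m. a \<otimes> x \<in> J i"
      using step_simple[OF ii _ nb] J(4) i by blast
    have gx: "g x \<in> carrier R" using ring_hom_closed[OF g x(1)] .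
    have iLi: "ideal (L i) R" "ideal (L (Suc i)) R" using iL i by auto
    have iPg: "ideal (PIdl (g x)) R" using cgenideal_ideal[OF gx] .
    have eq: "L (Suc i) = L i <+> PIdl (g x)"
    proof
      have "g ` J (Suc i) \<subseteq> L i <+> PIdl (g x)"
      proof
        fix w assume "w \<in> g ` J (Suc i)"
        then obtain v where v: "v \<in> J (Suc i)" "w = g v" by blast
        then have "v \<in> J i <+> PIdl x" using x(2) by simp
        then obtain j z where jz: "j \<in> J i" "z \<in> PIdl x" "v = j \<oplus> z" by (rule set_addE)
        then obtain r where r: "r \<in> carrier R" "z = r \<otimes> x" unfolding cgenideal_def by blast
        have jc: "j \<in> carrier R" using ideal_carr[OF ii(1) jz(1)] .
        have "w = g j \<oplus> g r \<otimes> g x"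
          using v jz r jc x(1) ring_hom_add[OF g] ring_hom_mult[OF g] by simp
        moreover have "g j \<in> L i" unfolding L_def using genideal_self[OF gJ[of i]] i jz(1) by auto
        moreover have "g r \<otimes> g x \<in> PIdl (g x)" unfolding cgenideal_def
          using ring_hom_closed[OF g r(1)] by blast
        ultimately show "w \<in> L i <+> PIdl (g x)" using set_addI by blast
      qed
      then show "L (Suc i) \<subseteq> L i <+> PIdl (g x)" unfolding L_def
        using genideal_minimal[OF add_ideals[OF iLi(1)[unfolded L_def] iPg]] by blast
    next
      have "g x \<in> L (Suc i)"
      proof -
        have "x \<in> J (Suc i)" using x(2) set_add_upper2[OF ii(1) cgenideal_ideal[OF x(1)]]
          cgenideal_self[OF x(1)] by blast
        then show ?thesis unfolding L_def using genideal_self[OF gJ[of "Suc i"]] i by auto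
      qed
      then have "PIdl (g x) \<subseteq> L (Suc i)" using cgenideal_minimal[OF iLi(2)] by blast
      then show "L i <+> PIdl (g x) \<subseteq> L (Suc i)"
        using set_add_least[OF iLi(1) iPg iLi(2)] mL i by blast
    qed
    have Kx: "\<forall>r\<in>K. r \<otimes> g x \<in> L i"
    proof -
      define C where "C = {r \<in> carrier R. r \<otimes> g x \<in> L i}"
      have iC: "ideal C R" unfolding C_def using colon_ideal[OF iLi(1) gx] .
      have "g ` m \<subseteq> C"
      proof
        fix w assume "w \<in> g ` m"
        then obtain a where a: "a \<in> m" "w = g a" by blast
        have ac: "a \<in> carrier R" using a m_carr by blast
        have "w \<otimes> g x = g (a \<otimes> x)" using a ac x(1) ring_hom_mult[OF g] by simp
        moreover have "a \<otimes> x \<in> J i" using x(3) a by blast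
        then have "g (a \<otimes> x) \<in> L i" unfolding L_def using genideal_self[OF gJ[of i]] i by auto
        ultimately show "w \<in> C" unfolding C_def using a ac ring_hom_closed[OF g] by auto
      qed
      then have "K \<subseteq> C" unfolding K_def using genideal_minimal[OF iC] by blast
      then show ?thesis unfolding C_def by blast
    qed
    show "bnd R (L i) (L (Suc i)) q"
      unfolding eq using bnd_cyclic[OF iLi(1) iK gx Kx] bg K_def by simp
  qed
  have "bnd R (L 0) (L k) (k * q)" using bnd_iter[OF iL mL bL] .
  then show ?thesis using L0 Lk k_def I_def by simp
qed


lemma bnd_le: "bnd R A B n \<Longrightarrow> n \<le> n' \<Longrightarrow> bnd R A B n'"
  unfolding bnd_def by fastforce

lemma pow_in_ideal_or_step:
  assumes iA: "ideal A R" and x: "x \<in> m"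
    and eq: "A <+> PIdl (x [^] Suc e) = A <+> PIdl (x [^] e)"
  shows "x [^] e \<in> A"
proof -
  have xc: "x \<in> carrier R" using x m_carr by blast
  have pc: "x [^] e \<in> carrier R" "x [^] Suc e \<in> carrier R" using xc by auto
  have "x [^] e \<in> A <+> PIdl (x [^] e)"
    using set_add_upper2[OF iA cgenideal_ideal[OF pc(1)]] cgenideal_self[OF pc(1)] by blast
  then have "x [^] e \<in> A <+> PIdl (x [^] Suc e)" using eq by simp
  then obtain a z where az: "a \<in> A" "z \<in> PIdl (x [^] Suc e)" "x [^] e = a \<oplus> z" by (rule set_addE)
  then obtain r where r: "r \<in> carrier R" "z = r \<otimes> x [^] Suc e" unfolding cgenideal_def by blast
  have ac: "a \<in> carrier R" using ideal_carr[OF iA az(1)] .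
  have rx: "r \<otimes> x \<in> m" using ideal.I_l_closed[OF im x r(1)] .
  have "(\<one> \<ominus> r \<otimes> x) \<otimes> x [^] e = a"
  proof -
    have "z = (r \<otimes> x) \<otimes> x [^] e" using r xc pc by (simp add: m_ac)
    then have xe: "x [^] e = a \<oplus> (r \<otimes> x) \<otimes> x [^] e" using az by simp
    have wc: "(r \<otimes> x) \<otimes> x [^] e \<in> carrier R" using r xc pc by simp
    have "(\<one> \<ominus> r \<otimes> x) \<otimes> x [^] e = x [^] e \<ominus> (r \<otimes> x) \<otimes> x [^] e"
      using r(1) xc pc(1) by algebra
    also have "\<dots> = (a \<oplus> (r \<otimes> x) \<otimes> x [^] e) \<ominus> (r \<otimes> x) \<otimes> x [^] e"
      using xe by simp
    also have "\<dots> = a" using ac wc by algebra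
    finally show ?thesis .
  qed
  obtain u where u: "u \<in> carrier R" "u \<otimes> (\<one> \<ominus> r \<otimes> x) = \<one>" using unit_lemma[OF rx] by blast
  have "x [^] e = u \<otimes> ((\<one> \<ominus> r \<otimes> x) \<otimes> x [^] e)"
  proof -
    have "u \<otimes> ((\<one> \<ominus> r \<otimes> x) \<otimes> x [^] e) = (u \<otimes> (\<one> \<ominus> r \<otimes> x)) \<otimes> x [^] e"
      using u(1) r xc pc by (intro m_assoc[symmetric]) auto
    also have "\<dots> = \<one> \<otimes> x [^] e" by (simp only: u(2))
    also have "\<dots> = x [^] e" using pc by simp
    finally show ?thesis by simp
  qed
  also have "\<dots> = u \<otimes> a" using \<open>(\<one> \<ominus> r \<otimes> x) \<otimes> x [^] e = a\<close> by simp
  finally show ?thesis using ideal.I_l_closed[OF iA az(1) u(1)] by simp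
qed

lemma rad_from_bnd:
  assumes iA: "ideal A R" and b: "bnd R A (carrier R) n" and x: "x \<in> m"
  shows "\<exists>j::nat. x [^] j \<in> A"
proof (rule ccontr)
  assume nx: "\<not> ?thesis"
  have xc: "x \<in> carrier R" using x m_carr by blast
  define E where "E i = A <+> PIdl (x [^] (Suc n - i))" for i
  have pc: "\<And>e. x [^] (e::nat) \<in> carrier R" using xc by simp
  have iE: "\<forall>i\<le>Suc n. ideal (E i) R" unfolding E_def using add_ideals[OF iA cgenideal_ideal[OF pc]] by blast
  have En: "E (Suc n) = carrier R"
  proof -
    have "x [^] (0::nat) \<in> A <+> PIdl (x [^] (0::nat))"
      using set_add_upper2[OF iA cgenideal_ideal[OF pc[of 0]]] cgenideal_self[OF pc[of 0]] by blast
    then have "\<one> \<in> E (Suc n)" unfolding E_def by simp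
    then show ?thesis using ideal.one_imp_carrier iE by blast
  qed
  have strict: "E i \<subset> E (Suc i)" if i: "i < Suc n" for i
  proof -
    define e where "e = n - i"
    have ee: "Suc n - i = Suc e" "Suc n - Suc i = e" unfolding e_def using i by auto
    have "PIdl (x [^] Suc e) \<subseteq> PIdl (x [^] e)"
    proof (rule cgenideal_minimal[OF cgenideal_ideal[OF pc]])
      show "x [^] Suc e \<in> PIdl (x [^] e)" unfolding cgenideal_def using xc pc m_comm by auto
    qed
    then have sub: "E i \<subseteq> E (Suc i)" unfolding E_def ee
      using set_add_least[OF iA cgenideal_ideal[OF pc] add_ideals[OF iA cgenideal_ideal[OF pc]]]
        set_add_upper1[OF iA cgenideal_ideal[OF pc]] set_add_upper2[OF iA cgenideal_ideal[OF pc]]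
      by blast
    have "E i \<noteq> E (Suc i)"
    proof
      assume "E i = E (Suc i)"
      then have "A <+> PIdl (x [^] Suc e) = A <+> PIdl (x [^] e)" unfolding E_def ee .
      then have "x [^] e \<in> A" using pow_in_ideal_or_step[OF iA x] by blast
      then show False using nx by blast
    qed
    then show ?thesis using sub by blast
  qed
  have "chainI R (E 0) (carrier R) (Suc n)" unfolding chainI_def
    using iE En strict by blast
  moreover have "bnd R (E 0) (carrier R) n"
  proof (rule bnd_mono_left[OF iA _ _ b])
    show "ideal (E 0) R" using iE by blast
    show "A \<subseteq> E 0" unfolding E_def by (simp only: diff_zero) (rule set_add_upper1[OF iA cgenideal_ideal[OF pc]])
  qed
  ultimately show False unfolding bnd_def by fastforce
qed

lemma pow_in_m:
  assumes "x \<in> carrier R" "x [^] (k::nat) \<in> m"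
  shows "x \<in> m"
  using assms
proof (induction k)
  case 0 then show ?case using one_notin_m by simp
next
  case (Suc k)
  have "x [^] k \<otimes> x \<in> m" using Suc.prems by simp
  then have "x [^] k \<in> m \<or> x \<in> m"
    using primeideal.I_prime[OF maximalideal_prime[OF max]] Suc.prems(1) by simp
  then show ?case using Suc by blast
qed

lemma flh_from_bnd:
  assumes f: "f \<in> ring_hom R R" and fm: "f ` m \<subseteq> m"
    and b: "bnd R (Idl (f ` m)) (carrier R) n"
  shows "finite_length_hom R m R m f"
proof -
  have fc: "f ` m \<subseteq> carrier R" using fm m_carr by blast
  have iI: "ideal (Idl (f ` m)) R" using genideal_ideal[OF fc] .
  have Im: "Idl (f ` m) \<subseteq> m" using genideal_minimal[OF im fm] .
  have "ring_radical R (Idl (f ` m)) = m"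
  proof
    show "ring_radical R (Idl (f ` m)) \<subseteq> m"
      unfolding ring_radical_def using pow_in_m Im by blast
    show "m \<subseteq> ring_radical R (Idl (f ` m))"
      unfolding ring_radical_def using rad_from_bnd[OF iI b] m_carr by blast
  qed
  then show ?thesis unfolding finite_length_hom_def using f fm by blast
qed


lemma sum_upd:
  assumes "finite G" "g \<in> G"
  shows "sum (f(g := v)) G + f g = sum f G + (v::nat)"
proof -
  have "sum (f(g := v)) G = (f(g := v)) g + sum (f(g := v)) (G - {g})" by (rule sum.remove[OF assms])
  then have "sum (f(g := v)) G = v + sum (f(g := v)) (G - {g})" by simp
  moreover have "sum (f(g := v)) (G - {g}) = sum f (G - {g})" by (rule sum.cong) auto
  moreover have "sum f G = f g + sum f (G - {g})" using sum.remove[OF assms] by simp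
  ultimately show ?thesis by simp
qed

lemma bnd_from_gens:
  assumes G: "finite G" "G \<subseteq> carrier R" "m = Idl G"
  shows "ideal A R \<Longrightarrow> (\<forall>g\<in>G. g [^] (f g :: nat) \<in> A) \<Longrightarrow> bnd R A (carrier R) (2 ^ sum f G)"
proof (induction "sum f G" arbitrary: A f rule: less_induct)
  case less
  note iA = less.prems(1) and pw = less.prems(2)
  show ?case
  proof (cases "\<exists>g\<in>G. f g = 0")
    case True
    then obtain g where g: "g \<in> G" "f g = 0" by blast
    then have "\<one> \<in> A" using pw by force
    then have "A = carrier R" using ideal.one_imp_carrier[OF iA] by blast
    then show ?thesis using bnd_le[OF bnd_carrier] by simp
  next
    case False
    show ?thesis
    proof (cases "\<exists>g\<in>G. f g \<ge> 2")
      case False2: False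
      then have "\<forall>g\<in>G. f g = 1" using False by fastforce
      then have "G \<subseteq> A" using pw G(2) by force
      then have "m \<subseteq> A" using G(3) genideal_minimal[OF iA] by blast
      then have "bnd R A (carrier R) 1" using bnd_mono_left[OF im iA _ bnd_maximal[OF max]] by blast
      moreover have "1 \<le> (2::nat) ^ sum f G" by simp
      ultimately show ?thesis by (rule bnd_le)
    next
      case True
      then obtain g where g: "g \<in> G" "f g \<ge> 2" by blast
      have gc: "g \<in> carrier R" using g G(2) by blast
      define s where "s = sum f G"
      define f1 where "f1 = f(g := f g - 1)"
      define f2 where "f2 = f(g := 1)"
      have s1: "sum f1 G + 1 = s" using sum_upd[OF G(1) g(1), of f "f g - 1"] g(2) unfolding f1_def s_def by simp
      have s2: "sum f2 G + (f g - 1) = s" using sum_upd[OF G(1) g(1), of f 1] g(2) unfolding f2_def s_def by simp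
      define C where "C = {r \<in> carrier R. r \<otimes> g \<in> A}"
      have iC: "ideal C R" unfolding C_def using colon_ideal[OF iA gc] .
      have AC: "A \<subseteq> C" unfolding C_def using ideal.I_r_closed[OF iA _ gc] ideal_sub_carrier[OF iA] by blast
      have pw1: "\<forall>h\<in>G. h [^] f1 h \<in> C"
      proof
        fix h assume h: "h \<in> G"
        show "h [^] f1 h \<in> C"
        proof (cases "h = g")
          case True
          have e: "Suc (f g - 1) = f g" using g(2) by simp
          have "g [^] (f g - 1) \<otimes> g = g [^] Suc (f g - 1)" by simp
          then have "g [^] (f g - 1) \<otimes> g = g [^] f g" by (simp only: e)
          then show ?thesis using True pw g(1) gc unfolding C_def f1_def by auto
        next
          case False then show ?thesis using pw h AC unfolding f1_def by auto
        qed
      qed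
      have b1: "bnd R C (carrier R) (2 ^ sum f1 G)"
        using less.hyps[of f1 C] s1 iC pw1 s_def by simp
      define B where "B = A <+> PIdl g"
      have iPg: "ideal (PIdl g) R" using cgenideal_ideal[OF gc] .
      have iB: "ideal B R" unfolding B_def using add_ideals[OF iA iPg] .
      have AB: "A \<subseteq> B" unfolding B_def using set_add_upper1[OF iA iPg] .
      have pw2: "\<forall>h\<in>G. h [^] f2 h \<in> B"
      proof
        fix h assume h: "h \<in> G"
        show "h [^] f2 h \<in> B"
        proof (cases "h = g")
          case True
          have "g \<in> B" unfolding B_def using set_add_upper2[OF iA iPg] cgenideal_self[OF gc] by blast
          then show ?thesis using True gc unfolding f2_def by simp
        next
          case False then show ?thesis using pw h AB unfolding f2_def by auto
        qed
      qed
      have b2: "bnd R B (carrier R) (2 ^ sum f2 G)"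
        using less.hyps[of f2 B] s2 g(2) iB pw2 s_def by simp
      have Cg: "\<forall>r\<in>C. r \<otimes> g \<in> A" unfolding C_def by blast
      have b3: "bnd R A B (2 ^ sum f1 G)" unfolding B_def using bnd_cyclic[OF iA iC gc Cg b1] .
      have "bnd R A (carrier R) (2 ^ sum f1 G + 2 ^ sum f2 G)"
        using bnd_subadd[OF iA iB oneideal AB ideal_sub_carrier[OF iB] b3 b2] .
      moreover have "2 ^ sum f1 G + 2 ^ sum f2 G \<le> (2::nat) ^ s"
      proof -
        have "sum f1 G = s - 1" "sum f2 G \<le> s - 1" using s1 s2 g(2) by auto
        then have "(2::nat) ^ sum f2 G \<le> 2 ^ (s - 1)" by (simp add: power_increasing)
        moreover have "s \<ge> 1" using s1 by simp
        then obtain s' where "s = Suc s'" by (cases s) auto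
        then have "(2::nat) ^ (s - 1) + 2 ^ (s - 1) = 2 ^ s" by simp
        moreover have "(2::nat) ^ sum f1 G = 2 ^ (s - 1)" using \<open>sum f1 G = s - 1\<close> by simp
        ultimately show ?thesis by linarith
      qed
      ultimately show ?thesis unfolding s_def by (rule bnd_le)
    qed
  qed
qed

lemma bnd_from_rad:
  assumes G: "finite G" "G \<subseteq> carrier R" "m = Idl G"
    and iA: "ideal A R" and rad: "\<forall>x\<in>m. \<exists>e::nat. x [^] e \<in> A"
  shows "\<exists>n. bnd R A (carrier R) n"
proof -
  have "G \<subseteq> m" using G genideal_self by blast
  then have "\<forall>g\<in>G. \<exists>e::nat. g [^] e \<in> A" using rad by blast
  then obtain f where "\<forall>g\<in>G. g [^] (f g :: nat) \<in> A" by metis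
  then show ?thesis using bnd_from_gens[OF G iA] by blast
qed


lemma Idl_m: "Idl m = m"
  using genideal_minimal[OF im, of m] genideal_self[OF m_carr] by blast

lemma id_hom: "id \<in> ring_hom R R"
  by (rule ring_hom_memI) auto

lemma iter_props:
  assumes G: "finite G" "G \<subseteq> carrier R" "m = Idl G"
    and f: "\<phi> \<in> ring_hom R R" "\<phi> ` m \<subseteq> m" "ring_radical R (Idl (\<phi> ` m)) = m"
  shows "(\<phi> ^^ n) \<in> ring_hom R R \<and> (\<phi> ^^ n) ` m \<subseteq> m \<and> (\<exists>b. bnd R (Idl ((\<phi> ^^ n) ` m)) (carrier R) b)"
proof (induction n)
  case 0
  have "bnd R (Idl ((\<phi> ^^ 0) ` m)) (carrier R) 1" using bnd_maximal[OF max] Idl_m by simp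
  moreover have "\<phi> ^^ 0 \<in> ring_hom R R" unfolding funpow_0 using id_hom by (simp only: id_def)
  moreover have "(\<phi> ^^ 0) ` m \<subseteq> m" by simp
  ultimately show ?case by blast
next
  case (Suc n)
  have fc: "\<phi> ` m \<subseteq> carrier R" using f(2) m_carr by blast
  have iA: "ideal (Idl (\<phi> ` m)) R" using genideal_ideal[OF fc] .
  have "\<forall>x\<in>m. \<exists>e::nat. x [^] e \<in> Idl (\<phi> ` m)"
    using f(3) unfolding ring_radical_def by blast
  then obtain q where bq: "bnd R (Idl (\<phi> ` m)) (carrier R) q" using bnd_from_rad[OF G iA] by blast
  obtain b where b: "bnd R (Idl ((\<phi> ^^ n) ` m)) (carrier R) b" using Suc by blast
  have h: "\<phi> ^^ n \<in> ring_hom R R" "(\<phi> ^^ n) ` m \<subseteq> m" using Suc by auto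
  have "bnd R (Idl ((\<phi> \<circ> \<phi> ^^ n) ` m)) (carrier R) (quot_length R (Idl ((\<phi> ^^ n) ` m)) * q)"
    using mult_bound[OF h(1) f(1) b bq] .
  moreover have "\<phi> \<circ> \<phi> ^^ n \<in> ring_hom R R" using ring_hom_trans[OF h(1) f(1)] .
  moreover have "(\<phi> \<circ> \<phi> ^^ n) ` m \<subseteq> m" using h(2) f(2) by (auto simp: image_comp[symmetric])
  ultimately show ?case unfolding funpow.simps(2) by blast
qed

lemma iter_len:
  assumes h: "g \<in> ring_hom R R" "g ` m \<subseteq> m" "bnd R (Idl (g ` m)) (carrier R) b"
  shows "bnd R (Idl (g ` m)) (carrier R) (quot_length R (Idl (g ` m)))"
    "1 \<le> quot_length R (Idl (g ` m))"
proof -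
  have gc: "g ` m \<subseteq> carrier R" using h(2) m_carr by blast
  have iA: "ideal (Idl (g ` m)) R" using genideal_ideal[OF gc] .
  show "bnd R (Idl (g ` m)) (carrier R) (quot_length R (Idl (g ` m)))"
    unfolding bnd_def using quot_length_props(3)[OF iA h(3)] by blast
  have "Idl (g ` m) \<subseteq> m" using genideal_minimal[OF im h(2)] .
  then have "Idl (g ` m) \<noteq> carrier R" using m_ne m_carr by blast
  then show "1 \<le> quot_length R (Idl (g ` m))" using quot_length_pos[OF iA h(3)] by blast
qed

lemma submult:
  assumes f: "f \<in> ring_hom R R" "f ` m \<subseteq> m" "bnd R (Idl (f ` m)) (carrier R) b1"
    and g: "g \<in> ring_hom R R" "g ` m \<subseteq> m" "bnd R (Idl (g ` m)) (carrier R) b2"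
  shows "quot_length R (Idl ((g \<circ> f) ` m)) \<le> quot_length R (Idl (f ` m)) * quot_length R (Idl (g ` m))"
proof -
  have b: "bnd R (Idl ((g \<circ> f) ` m)) (carrier R) (quot_length R (Idl (f ` m)) * quot_length R (Idl (g ` m)))"
    using mult_bound[OF f(1) g(1) f(3) iter_len(1)[OF g]] .
  have "(g \<circ> f) ` m \<subseteq> carrier R" using f(2) g(2) m_carr by (auto simp: image_comp[symmetric])
  then have iA: "ideal (Idl ((g \<circ> f) ` m)) R" using genideal_ideal by blast
  show ?thesis using quot_length_props(1)[OF iA b] .
qed

end


lemma fekete_iter:
  fixes a :: "nat \<Rightarrow> real"
  assumes sub: "\<And>i j. a (i + j) \<le> a i + a j"
  shows "a (q * k + r) \<le> real q * a k + a r"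
proof (induction q)
  case 0 then show ?case by simp
next
  case (Suc q)
  have "a (Suc q * k + r) = a (k + (q * k + r))" by (simp add: add.assoc)
  also have "\<dots> \<le> a k + a (q * k + r)" by (rule sub)
  also have "\<dots> \<le> a k + (real q * a k + a r)" using Suc by simp
  finally show ?case by (simp add: algebra_simps)
qed

lemma fekete:
  fixes a :: "nat \<Rightarrow> real"
  assumes a0: "\<And>n. a n \<ge> 0" and sub: "\<And>i j. a (i + j) \<le> a i + a j"
  shows "(\<lambda>n. a (Suc n) / real (Suc n)) \<longlonglongrightarrow> (INF n\<in>{1..}. a n / real n)"
proof -
  define L where "L = (INF n\<in>{1..}. a n / real n)"
  have bdd: "bdd_below ((\<lambda>n. a n / real n) ` {1..})"
    by (rule bdd_belowI[of _ 0]) (use a0 in auto)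
  have lower: "L \<le> a n / real n" if "n \<ge> 1" for n
    unfolding L_def by (rule cINF_lower[OF bdd]) (use that in simp)
  show ?thesis unfolding L_def[symmetric]
  proof (rule LIMSEQ_I)
    fix \<epsilon> :: real assume e: "\<epsilon> > 0"
    have "\<exists>k\<ge>1. a k / real k < L + \<epsilon> / 2"
    proof (rule ccontr)
      assume "\<not> ?thesis"
      then have "\<forall>k\<in>{1..}. L + \<epsilon> / 2 \<le> a k / real k" by force
      then have "L + \<epsilon> / 2 \<le> L" unfolding L_def by (intro cINF_greatest) auto
      then show False using e by simp
    qed
    then obtain k where k: "k \<ge> 1" "a k / real k < L + \<epsilon> / 2" by blast
    define S where "S = (\<Sum>r<k. a r)"
    have S0: "S \<ge> 0" unfolding S_def using a0 by (simp add: sum_nonneg)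
    have aS: "a r \<le> S" if "r < k" for r
      unfolding S_def using that a0 by (intro member_le_sum) auto
    obtain N :: nat where N: "N > 2 * S / \<epsilon>" using reals_Archimedean2 by blast
    show "\<exists>no. \<forall>n\<ge>no. norm (a (Suc n) / real (Suc n) - L) < \<epsilon>"
    proof (intro exI allI impI)
      fix n assume n: "n \<ge> N"
      define n' where "n' = Suc n"
      have n'pos: "real n' > 0" unfolding n'_def by simp
      have low: "L \<le> a n' / real n'" using lower[of n'] unfolding n'_def by simp
      define q where "q = n' div k"
      define r where "r = n' mod k"
      have nqr: "n' = q * k + r" unfolding q_def r_def by simp
      have rk: "r < k" unfolding r_def using k(1) by simp
      have "a n' \<le> real q * a k + a r" unfolding nqr by (rule fekete_iter[OF sub])
      also have "\<dots> \<le> real q * a k + S" using aS[OF rk] by simp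
      finally have an: "a n' \<le> real q * a k + S" .
      have qk: "real q * real k \<le> real n'" unfolding nqr by simp
      have "real q * a k = (real q * real k) * (a k / real k)" using k(1) by simp
      also have "\<dots> \<le> real n' * (a k / real k)"
        using qk a0[of k] k(1) by (intro mult_right_mono) auto
      finally have "a n' \<le> real n' * (a k / real k) + S" using an by simp
      then have "a n' / real n' \<le> a k / real k + S / real n'"
        using n'pos by (simp add: field_simps)
      moreover have "S / real n' < \<epsilon> / 2"
      proof -
        have "real n' > 2 * S / \<epsilon>" using N n unfolding n'_def by simp
        then have "real n' * \<epsilon> > 2 * S" using e by (simp add: field_simps)
        then show ?thesis using n'pos e by (simp add: field_simps)
      qed
      ultimately have "a n' / real n' < L + \<epsilon>" using k(2) by linarith
      then show "norm (a (Suc n) / real (Suc n) - L) < \<epsilon>"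
        using low unfolding n'_def by simp
    qed
  qed
qed


theorem mainTheorem1:
  fixes R :: "('a, 'b) ring_scheme" and m :: "'a set" and \<phi> :: "'a \<Rightarrow> 'a"
  assumes "noetherian_local R m"
    and "finite_length_hom R m R m \<phi>"
  shows "(\<forall>n\<ge>1. finite_length_hom R m R m (\<phi> ^^ n))
    \<and> convergent (\<lambda>n. ln (real (hom_length R m R (\<phi> ^^ Suc n))) / real (Suc n))
    \<and> (\<lambda>n. ln (real (hom_length R m R (\<phi> ^^ Suc n))) / real (Suc n))
        \<longlonglongrightarrow> (INF n\<in>{1..}. ln (real (hom_length R m R (\<phi> ^^ n))) / real n)"
proof -
  have nc: "noetherian_cring R" and mx: "maximalideal m R" and un: "\<And>I. maximalideal I R \<Longrightarrow> I = m"
    using assms(1) unfolding noetherian_local_def by auto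
  have cr: "cring R" using nc unfolding noetherian_cring_def by blast
  interpret lring R m
    by (rule lring.intro[OF cr], rule lring_axioms.intro[OF mx un])
  obtain G where G: "finite G" "G \<subseteq> carrier R" "m = genideal R G"
    using nc im unfolding noetherian_cring_def by blast
  have f: "\<phi> \<in> ring_hom R R" "\<phi> ` m \<subseteq> m" "ring_radical R (genideal R (\<phi> ` m)) = m"
    using assms(2) unfolding finite_length_hom_def by auto
  note P = iter_props[OF G f]
  have P1: "\<phi> ^^ n \<in> ring_hom R R" "(\<phi> ^^ n) ` m \<subseteq> m" for n using P by auto
  have P2: "\<exists>b. bnd R (genideal R ((\<phi> ^^ n) ` m)) (carrier R) b" for n using P by blast
  have flh: "finite_length_hom R m R m (\<phi> ^^ n)" for n
    using P2[of n] flh_from_bnd[OF P1] by blast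
  define l where "l n = hom_length R m R (\<phi> ^^ n)" for n
  have l1: "1 \<le> l n" for n
    using P2[of n] iter_len(2)[OF P1] unfolding l_def hom_length_def by blast
  have lsub: "l (i + j) \<le> l i * l j" for i j
  proof -
    obtain b1 where b1: "bnd R (genideal R ((\<phi> ^^ i) ` m)) (carrier R) b1" using P2 by blast
    obtain b2 where b2: "bnd R (genideal R ((\<phi> ^^ j) ` m)) (carrier R) b2" using P2 by blast
    have "\<phi> ^^ (i + j) = \<phi> ^^ j \<circ> \<phi> ^^ i" using funpow_add[of j i \<phi>] by (simp add: add.commute)
    then show ?thesis unfolding l_def hom_length_def
      using submult[OF P1 b1 P1 b2] by simp
  qed
  define a where "a n = ln (real (l n))" for n
  have a0: "\<And>n. a n \<ge> 0" unfolding a_def using l1 by simp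
  have asub: "\<And>i j. a (i + j) \<le> a i + a j"
  proof -
    fix i j
    have pos: "real (l i) > 0" "real (l j) > 0" "real (l (i + j)) > 0" using l1[of i] l1[of j] l1[of "i + j"] by auto
    have "real (l (i + j)) \<le> real (l i) * real (l j)" using lsub[of i j] by (metis of_nat_mono of_nat_mult)
    then have "ln (real (l (i + j))) \<le> ln (real (l i) * real (l j))" using pos by simp
    also have "\<dots> = ln (real (l i)) + ln (real (l j))" using pos by (simp add: ln_mult)
    finally show "a (i + j) \<le> a i + a j" unfolding a_def .
  qed
  have lim: "(\<lambda>n. a (Suc n) / real (Suc n)) \<longlonglongrightarrow> (INF n\<in>{1..}. a n / real n)"
    using fekete[OF a0 asub] .
  then have lim': "(\<lambda>n. ln (real (hom_length R m R (\<phi> ^^ Suc n))) / real (Suc n))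
        \<longlonglongrightarrow> (INF n\<in>{1..}. ln (real (hom_length R m R (\<phi> ^^ n))) / real n)"
    unfolding a_def l_def .
  show ?thesis using flh lim' convergentI by blast
qed

end
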